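(* Let $\Gamma$ be the bipartite graph with vertex set $\{L_1,\dots,L_{12}\}\sqcup\{M_1,\dots,M_{12}\}$, where no two $L$'s and no two $M$'s are adjacent, and $L_i$ is adjacent to $M_j$ if and only if $j\in N(i)$, with $N(1)=\{1,2,6,8,9,12\}$, $N(2)=\{1,2,5,7,10,11\}$, $N(3)=\{3,4,6,8,10,11\}$, $N(4)=\{3,4,5,7,9,12\}$, $N(5)=\{2,4,5,6,10,12\}$, $N(6)=\{1,3,5,6,9,11\}$, $N(7)=\{2,4,7,8,9,11\}$, $N(8)=\{1,3,7,8,10,12\}$, $N(9)=\{1,4,6,7,9,10\}$, $N(10)=\{2,3,5,8,9,10\}$, $N(11)=\{2,3,6,7,11,12\}$, $N(12)=\{1,4,5,8,11,12\}$. Let $\mathbb{Z}\Gamma$ be the free abelian group on the $24$ vertices with the symmetric bilinear form whose Gram matrix is $A-2\mathbb{I}_{24}$ ($A$ the adjacency matrix of $\Gamma$), and let $S=\mathbb{Z}\Gamma/\operatorname{rad}(\mathbb{Z}\Gamma)$, where $\operatorname{rad}(\mathbb{Z}\Gamma)$ is the kernel of the form. Then $S$ has rank $15$ and is freely generated by the images of $L_2, L_3, L_4, L_5, L_6, L_7, L_8, L_{11}, M_1, M_2, M_3, M_6, M_8, M_9, M_{12}$. Moreover, the discriminant group $S^\vee/S$ is isomorphic to $(\mathbb{Z}/2\mathbb{Z})^{\oplus 4}\oplus\mathbb{Z}/16\mathbb{Z}$.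
   Context: The radical of a lattice $L$ is $L^\perp=\{v\in L: v\cdot w=0\ \forall w\in L\}$; $S$ is a nondegenerate lattice and $S^\vee=\operatorname{Hom}(S,\mathbb{Z})$ is its dual. *)

theory Defs
  imports "HOL-Algebra.Elementary_Groups" "HOL-Algebra.Coset"
begin

datatype vtx = L nat | M nat

definition Vs :: "vtx set" where
  "Vs = L ` {1..12} \<union> M ` {1..12}"

definition Nb :: "nat \<Rightarrow> nat set" where
  "Nb i = (if i = 1 then {1,2,6,8,9,12}
      else if i = 2 then {1,2,5,7,10,11}
      else if i = 3 then {3,4,6,8,10,11}
      else if i = 4 then {3,4,5,7,9,12}
      else if i = 5 then {2,4,5,6,10,12}
      else if i = 6 then {1,3,5,6,9,11}
      else if i = 7 then {2,4,7,8,9,11}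
      else if i = 8 then {1,3,7,8,10,12}
      else if i = 9 then {1,4,6,7,9,10}
      else if i = 10 then {2,3,5,8,9,10}
      else if i = 11 then {2,3,6,7,11,12}
      else if i = 12 then {1,4,5,8,11,12}
      else {})"

fun adj :: "vtx \<Rightarrow> vtx \<Rightarrow> bool" where
  "adj (L i) (M j) = (j \<in> Nb i)"
| "adj (M j) (L i) = (j \<in> Nb i)"
| "adj _ _ = False"

definition gram :: "vtx \<Rightarrow> vtx \<Rightarrow> int" where
  "gram u v = (if adj u v then 1 else 0) - (if u = v then 2 else 0)"

definition ZGamma :: "(vtx \<Rightarrow> int) set" where
  "ZGamma = {x. \<forall>v. v \<notin> Vs \<longrightarrow> x v = 0}"

definition form :: "(vtx \<Rightarrow> int) \<Rightarrow> (vtx \<Rightarrow> int) \<Rightarrow> int" where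
  "form x y = (\<Sum>u\<in>Vs. \<Sum>v\<in>Vs. x u * gram u v * y v)"

definition rad :: "(vtx \<Rightarrow> int) set" where
  "rad = {x \<in> ZGamma. \<forall>y \<in> ZGamma. form x y = 0}"

definition e :: "vtx \<Rightarrow> (vtx \<Rightarrow> int)" where
  "e v = (\<lambda>u. if u = v then 1 else 0)"

definition comb :: "vtx set \<Rightarrow> (vtx \<Rightarrow> int) \<Rightarrow> (vtx \<Rightarrow> int)" where
  "comb B c = (\<lambda>u. \<Sum>v\<in>B. c v * e v u)"

definition Bgens :: "vtx set" where
  "Bgens = {L 2, L 3, L 4, L 5, L 6, L 7, L 8, L 11, M 1, M 2, M 3, M 6, M 8, M 9, M 12}"

definition freely_generates_S :: "vtx set \<Rightarrow> bool" where
  "freely_generates_S B \<longleftrightarrow>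
     (\<forall>x \<in> ZGamma. \<exists>c. (\<lambda>v. x v - comb B c v) \<in> rad) \<and>
     (\<forall>c. comb B c \<in> rad \<longrightarrow> (\<forall>v\<in>B. c v = 0))"

text \<open>Dual S^vee = Hom(S, Z), realized as additive maps Z Gamma -> Z vanishing on the radical
  (extended by 0 outside Z Gamma).\<close>
definition Sdual :: "((vtx \<Rightarrow> int) \<Rightarrow> int) set" where
  "Sdual = {f. (\<forall>x\<in>ZGamma. \<forall>y\<in>ZGamma. f (\<lambda>v. x v + y v) = f x + f y)
             \<and> (\<forall>r\<in>rad. f r = 0) \<and> (\<forall>x. x \<notin> ZGamma \<longrightarrow> f x = 0)}"

definition S_in_dual :: "((vtx \<Rightarrow> int) \<Rightarrow> int) set" where
  "S_in_dual = {f. \<exists>x\<in>ZGamma. f = (\<lambda>y. if y \<in> ZGamma then form x y else 0)}"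

definition dual_group :: "((vtx \<Rightarrow> int) \<Rightarrow> int) monoid" where
  "dual_group = \<lparr>carrier = Sdual, mult = (\<lambda>f g z. f z + g z), one = (\<lambda>z. 0)\<rparr>"

end

theory Submission
  imports Defs
begin

definition lin :: "(vtx \<Rightarrow> int) \<Rightarrow> vtx \<Rightarrow> int" where
  "lin x w = (\<Sum>u\<in>Vs. x u * gram u w)"

lemma Vs_explicit: "Vs = {L 1, L 2, L 3, L 4, L 5, L 6, L 7, L 8, L 9, L 10, L 11, L 12,
  M 1, M 2, M 3, M 4, M 5, M 6, M 7, M 8, M 9, M 10, M 11, M 12}"
proof -
  have "{1..12::nat} = {1,2,3,4,5,6,7,8,9,10,11,12}" by (auto; presburger)
  then show ?thesis unfolding Vs_def by auto
qed

lemma finite_Vs[simp]: "finite Vs" by (simp add: Vs_def)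

lemma gram_sym: "gram u v = gram v u"
  by (cases u; cases v) (auto simp: gram_def)

lemma form_lin: "form x y = (\<Sum>v\<in>Vs. lin x v * y v)"
  unfolding form_def lin_def
  by (subst sum.swap) (simp add: sum_distrib_right mult.assoc)

lemma form_sym: "form x y = form y x"
  unfolding form_def
  by (subst sum.swap) (simp add: gram_sym mult.commute mult.left_commute)

lemma e_in[simp]: "v \<in> Vs \<Longrightarrow> e v \<in> ZGamma"
  by (auto simp: ZGamma_def e_def)

lemma sum_delta_e: "v \<in> Vs \<Longrightarrow> (\<Sum>u\<in>Vs. g u * e v u) = g v"
  by (simp add: e_def if_distrib cong: if_cong)

lemma form_e: "w \<in> Vs \<Longrightarrow> form x (e w) = lin x w"
  by (simp add: form_lin sum_delta_e)

lemma rad_iff: "x \<in> rad \<longleftrightarrow> x \<in> ZGamma \<and> (\<forall>w\<in>Vs. lin x w = 0)"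
proof
  assume "x \<in> rad"
  then show "x \<in> ZGamma \<and> (\<forall>w\<in>Vs. lin x w = 0)"
    unfolding rad_def using form_e by (metis (mono_tags, lifting) e_in mem_Collect_eq)
next
  assume "x \<in> ZGamma \<and> (\<forall>w\<in>Vs. lin x w = 0)"
  then show "x \<in> rad" unfolding rad_def by (simp add: form_lin)
qed

lemma comb_eq: "comb B c u = (if u \<in> B then c u else 0)" if "finite B"
proof -
  have "comb B c u = (\<Sum>v\<in>B. if v = u then c v else 0)"
    unfolding comb_def e_def by (rule sum.cong) auto
  then show ?thesis using that by simp
qed

lemma zero_in[simp]: "(\<lambda>v. 0) \<in> ZGamma" by (simp add: ZGamma_def)

lemma add_in: "x \<in> ZGamma \<Longrightarrow> y \<in> ZGamma \<Longrightarrow> (\<lambda>v. x v + y v) \<in> ZGamma"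
  by (simp add: ZGamma_def)
lemma smult_in: "x \<in> ZGamma \<Longrightarrow> (\<lambda>v. k * x v) \<in> ZGamma"
  by (simp add: ZGamma_def)

lemma additive_scale:
  assumes add: "\<forall>x\<in>ZGamma. \<forall>y\<in>ZGamma. f (\<lambda>v. x v + y v) = f x + f y"
    and z: "z \<in> ZGamma"
  shows "f (\<lambda>v. k * z v) = k * f z"
proof -
  have f0: "f (\<lambda>v. 0) = 0" using add[rule_format, OF zero_in zero_in] by simp
  have nat: "f (\<lambda>v. int n * z v) = int n * f z" for n
  proof (induction n)
    case 0 then show ?case using f0 by simp
  next
    case (Suc n)
    have "f (\<lambda>v. int (Suc n) * z v) = f (\<lambda>v. int n * z v + z v)"
      by (simp add: algebra_simps)
    also have "\<dots> = f (\<lambda>v. int n * z v) + f z"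
      using add[rule_format, OF smult_in[OF z] z] by simp
    finally show ?case using Suc by (simp add: algebra_simps)
  qed
  have neg: "f (\<lambda>v. - z v) = - f z"
  proof -
    have "(\<lambda>v. - z v) \<in> ZGamma" using smult_in[OF z, of "-1"] by simp
    then have "f (\<lambda>v. - z v + z v) = f (\<lambda>v. - z v) + f z" by (rule add[rule_format, OF _ z])
    then show ?thesis using f0 by simp
  qed
  show ?thesis
  proof (cases "k \<ge> 0")
    case True
    then obtain n where "k = int n" using nonneg_int_cases by blast
    then show ?thesis using nat by simp
  next
    case False
    then obtain n where kn: "k = - int n" by (metis neg_0_le_iff_le nonneg_int_cases le_cases minus_minus)
    have "(\<lambda>v. int n * z v) \<in> ZGamma" using smult_in[OF z] .
    have "f (\<lambda>v. k * z v) = f (\<lambda>v. - (int n * z v))" by (simp add: kn)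
    also have "\<dots> = - f (\<lambda>v. int n * z v)"
    proof -
      have zz: "(\<lambda>v. int n * z v) \<in> ZGamma" using smult_in[OF z] .
      have "(\<lambda>v. - (int n * z v)) \<in> ZGamma" using smult_in[OF zz, of "-1"] by simp
      then have "f (\<lambda>v. - (int n * z v) + int n * z v) = f (\<lambda>v. - (int n * z v)) + f (\<lambda>v. int n * z v)"
        by (rule add[rule_format, OF _ zz])
      then show ?thesis using f0 by simp
    qed
    finally show ?thesis using nat kn by simp
  qed
qed

lemma additive_repr:
  assumes add: "\<forall>x\<in>ZGamma. \<forall>y\<in>ZGamma. f (\<lambda>v. x v + y v) = f x + f y"
    and y: "y \<in> ZGamma"
  shows "f y = (\<Sum>v\<in>Vs. y v * f (e v))"
proof -
  have f0: "f (\<lambda>v. 0) = 0" using add[rule_format, OF zero_in zero_in] by simp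
  have "\<forall>y. (\<forall>v. v \<notin> A \<longrightarrow> y v = 0) \<longrightarrow> f y = (\<Sum>v\<in>A. y v * f (e v))"
    if "finite A" "A \<subseteq> Vs" for A
    using that
  proof (induction A rule: finite_induct)
    case empty
    then show ?case using f0 by (auto simp: fun_eq_iff[symmetric])
  next
    case (insert a A)
    show ?case
    proof (intro allI impI)
      fix y :: "vtx \<Rightarrow> int"
      assume sy: "\<forall>v. v \<notin> insert a A \<longrightarrow> y v = 0"
      define y1 where "y1 = (\<lambda>v. if v = a then 0 else y v)"
      have aV: "a \<in> Vs" using insert by auto
      have y1Z: "y1 \<in> ZGamma" using sy insert(4) by (auto simp: ZGamma_def y1_def)
      have eZ: "e a \<in> ZGamma" using aV by simp
      have "y = (\<lambda>v. y1 v + y a * e a v)" by (auto simp: y1_def e_def)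
      then have "f y = f y1 + f (\<lambda>v. y a * e a v)"
        using add y1Z smult_in[OF eZ] by metis
      also have "f (\<lambda>v. y a * e a v) = y a * f (e a)"
        using additive_scale[OF add eZ] .
      also have "f y1 = (\<Sum>v\<in>A. y1 v * f (e v))"
        using insert sy by (auto simp: y1_def)
      also have "\<dots> = (\<Sum>v\<in>A. y v * f (e v))"
        using insert(2) by (intro sum.cong) (auto simp: y1_def)
      finally show "f y = (\<Sum>v\<in>insert a A. y v * f (e v))"
        using insert by simp
    qed
  qed
  then show ?thesis using y by (auto simp: ZGamma_def)
qed

lemma lin_L1: "lin x (L 1) = - 2 * x (L 1) + x (M 1) + x (M 2) + x (M 6) + x (M 8) + x (M 9) + x (M 12)"
  by (simp add: lin_def Vs_explicit gram_def Nb_def)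

lemma lin_L2: "lin x (L 2) = - 2 * x (L 2) + x (M 1) + x (M 2) + x (M 5) + x (M 7) + x (M 10) + x (M 11)"
  by (simp add: lin_def Vs_explicit gram_def Nb_def)

lemma lin_L3: "lin x (L 3) = - 2 * x (L 3) + x (M 3) + x (M 4) + x (M 6) + x (M 8) + x (M 10) + x (M 11)"
  by (simp add: lin_def Vs_explicit gram_def Nb_def)

lemma lin_L4: "lin x (L 4) = - 2 * x (L 4) + x (M 3) + x (M 4) + x (M 5) + x (M 7) + x (M 9) + x (M 12)"
  by (simp add: lin_def Vs_explicit gram_def Nb_def)

lemma lin_L5: "lin x (L 5) = - 2 * x (L 5) + x (M 2) + x (M 4) + x (M 5) + x (M 6) + x (M 10) + x (M 12)"
  by (simp add: lin_def Vs_explicit gram_def Nb_def)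

lemma lin_L6: "lin x (L 6) = - 2 * x (L 6) + x (M 1) + x (M 3) + x (M 5) + x (M 6) + x (M 9) + x (M 11)"
  by (simp add: lin_def Vs_explicit gram_def Nb_def)

lemma lin_L7: "lin x (L 7) = - 2 * x (L 7) + x (M 2) + x (M 4) + x (M 7) + x (M 8) + x (M 9) + x (M 11)"
  by (simp add: lin_def Vs_explicit gram_def Nb_def)

lemma lin_L8: "lin x (L 8) = - 2 * x (L 8) + x (M 1) + x (M 3) + x (M 7) + x (M 8) + x (M 10) + x (M 12)"
  by (simp add: lin_def Vs_explicit gram_def Nb_def)

lemma lin_L9: "lin x (L 9) = - 2 * x (L 9) + x (M 1) + x (M 4) + x (M 6) + x (M 7) + x (M 9) + x (M 10)"
  by (simp add: lin_def Vs_explicit gram_def Nb_def)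

lemma lin_L10: "lin x (L 10) = - 2 * x (L 10) + x (M 2) + x (M 3) + x (M 5) + x (M 8) + x (M 9) + x (M 10)"
  by (simp add: lin_def Vs_explicit gram_def Nb_def)

lemma lin_L11: "lin x (L 11) = - 2 * x (L 11) + x (M 2) + x (M 3) + x (M 6) + x (M 7) + x (M 11) + x (M 12)"
  by (simp add: lin_def Vs_explicit gram_def Nb_def)

lemma lin_L12: "lin x (L 12) = - 2 * x (L 12) + x (M 1) + x (M 4) + x (M 5) + x (M 8) + x (M 11) + x (M 12)"
  by (simp add: lin_def Vs_explicit gram_def Nb_def)

lemma lin_M1: "lin x (M 1) = x (L 1) + x (L 2) + x (L 6) + x (L 8) + x (L 9) + x (L 12) - 2 * x (M 1)"
  by (simp add: lin_def Vs_explicit gram_def Nb_def)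

lemma lin_M2: "lin x (M 2) = x (L 1) + x (L 2) + x (L 5) + x (L 7) + x (L 10) + x (L 11) - 2 * x (M 2)"
  by (simp add: lin_def Vs_explicit gram_def Nb_def)

lemma lin_M3: "lin x (M 3) = x (L 3) + x (L 4) + x (L 6) + x (L 8) + x (L 10) + x (L 11) - 2 * x (M 3)"
  by (simp add: lin_def Vs_explicit gram_def Nb_def)

lemma lin_M4: "lin x (M 4) = x (L 3) + x (L 4) + x (L 5) + x (L 7) + x (L 9) + x (L 12) - 2 * x (M 4)"
  by (simp add: lin_def Vs_explicit gram_def Nb_def)

lemma lin_M5: "lin x (M 5) = x (L 2) + x (L 4) + x (L 5) + x (L 6) + x (L 10) + x (L 12) - 2 * x (M 5)"
  by (simp add: lin_def Vs_explicit gram_def Nb_def)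

lemma lin_M6: "lin x (M 6) = x (L 1) + x (L 3) + x (L 5) + x (L 6) + x (L 9) + x (L 11) - 2 * x (M 6)"
  by (simp add: lin_def Vs_explicit gram_def Nb_def)

lemma lin_M7: "lin x (M 7) = x (L 2) + x (L 4) + x (L 7) + x (L 8) + x (L 9) + x (L 11) - 2 * x (M 7)"
  by (simp add: lin_def Vs_explicit gram_def Nb_def)

lemma lin_M8: "lin x (M 8) = x (L 1) + x (L 3) + x (L 7) + x (L 8) + x (L 10) + x (L 12) - 2 * x (M 8)"
  by (simp add: lin_def Vs_explicit gram_def Nb_def)

lemma lin_M9: "lin x (M 9) = x (L 1) + x (L 4) + x (L 6) + x (L 7) + x (L 9) + x (L 10) - 2 * x (M 9)"
  by (simp add: lin_def Vs_explicit gram_def Nb_def)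

lemma lin_M10: "lin x (M 10) = x (L 2) + x (L 3) + x (L 5) + x (L 8) + x (L 9) + x (L 10) - 2 * x (M 10)"
  by (simp add: lin_def Vs_explicit gram_def Nb_def)

lemma lin_M11: "lin x (M 11) = x (L 2) + x (L 3) + x (L 6) + x (L 7) + x (L 11) + x (L 12) - 2 * x (M 11)"
  by (simp add: lin_def Vs_explicit gram_def Nb_def)

lemma lin_M12: "lin x (M 12) = x (L 1) + x (L 4) + x (L 5) + x (L 8) + x (L 11) + x (L 12) - 2 * x (M 12)"
  by (simp add: lin_def Vs_explicit gram_def Nb_def)

lemmas lin_simps0 = lin_L1 lin_L2 lin_L3 lin_L4 lin_L5 lin_L6 lin_L7 lin_L8 lin_L9 lin_L10 lin_L11 lin_L12 lin_M1 lin_M2 lin_M3 lin_M4 lin_M5 lin_M6 lin_M7 lin_M8 lin_M9 lin_M10 lin_M11 lin_M12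
lemmas lin_simps = lin_simps0 lin_simps0[simplified]

definition cvec :: "(vtx \<Rightarrow> int) \<Rightarrow> vtx \<Rightarrow> int" where
  "cvec x w = (if w = L 2 then x (L 2) - x (L 1) - x (M 5) - x (M 7) - x (M 10) - x (M 11) else if w = L 3 then x (L 3) + x (L 1) + x (M 5) + x (M 7) else if w = L 4 then x (L 4) + x (L 1) + x (M 10) + x (M 11) else if w = L 5 then x (L 5) - x (L 1) + x (L 9) + x (L 10) + x (L 12) - x (M 4) - x (M 5) - x (M 10) else if w = L 6 then x (L 6) + x (L 1) - x (L 9) + x (M 4) + x (M 7) + x (M 10) else if w = L 7 then x (L 7) - x (L 1) - x (L 10) - x (M 4) - x (M 7) - x (M 11) else if w = L 8 then x (L 8) + x (L 1) - x (L 12) + x (M 4) + x (M 5) + x (M 11) else if w = L 11 then x (L 11) + x (L 9) + x (L 10) + x (L 12) else if w = M 1 then x (M 1) - x (L 9) - x (L 12) + x (M 4) else if w = M 2 then x (M 2) - 2 * x (L 1) + x (L 9) + x (L 12) - x (M 4) - x (M 5) - x (M 7) - x (M 10) - x (M 11) else if w = M 3 then x (M 3) + 2 * x (L 1) + x (M 4) + x (M 5) + x (M 7) + x (M 10) + x (M 11) else if w = M 6 then x (M 6) + x (L 10) + x (L 12) + x (M 7) else if w = M 8 then x (M 8) - x (L 10) - x (L 12) + x (M 5) else if w = M 9 then x (M 9) - x (L 9) - x (L 10) + x (M 10) else if w = M 12 then x (M 12) + x (L 9) + x (L 10) + x (M 11) else 0)"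

lemma Bgens_explicit: "Bgens = {L 2, L 3, L 4, L 5, L 6, L 7, L 8, L 11, M 1, M 2, M 3, M 6, M 8, M 9, M 12}"
  by (simp add: Bgens_def)

lemma finite_Bgens[simp]: "finite Bgens" by (simp add: Bgens_def)

lemma card_Bgens: "card Bgens = 15" by (simp add: Bgens_def)

lemma part_a: assumes x: "x \<in> ZGamma" shows "(\<lambda>v. x v - comb Bgens (cvec x) v) \<in> rad"
  unfolding rad_iff
proof
  show "(\<lambda>v. x v - comb Bgens (cvec x) v) \<in> ZGamma"
    using x by (auto simp: ZGamma_def comb_eq Bgens_def Vs_def)
  show "\<forall>w\<in>Vs. lin (\<lambda>v. x v - comb Bgens (cvec x) v) w = 0"
    by (simp add: Vs_explicit lin_simps comb_eq Bgens_explicit cvec_def algebra_simps)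
qed

lemma part_b: assumes r: "comb Bgens c \<in> rad" shows "\<forall>v\<in>Bgens. c v = 0"
proof -
  have E: "lin (comb Bgens c) (L 2) = 0" "lin (comb Bgens c) (L 3) = 0" "lin (comb Bgens c) (L 4) = 0" "lin (comb Bgens c) (L 5) = 0" "lin (comb Bgens c) (L 6) = 0" "lin (comb Bgens c) (L 7) = 0" "lin (comb Bgens c) (L 8) = 0" "lin (comb Bgens c) (L 11) = 0" "lin (comb Bgens c) (M 1) = 0" "lin (comb Bgens c) (M 2) = 0" "lin (comb Bgens c) (M 3) = 0" "lin (comb Bgens c) (M 6) = 0" "lin (comb Bgens c) (M 8) = 0" "lin (comb Bgens c) (M 9) = 0" "lin (comb Bgens c) (M 12) = 0"
    using r by (auto simp: rad_iff Vs_def)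
  have "16 * c (L 2) = (-20) * lin (comb Bgens c) (L 2) + (8) * lin (comb Bgens c) (L 3) + (8) * lin (comb Bgens c) (L 4) + (-10) * lin (comb Bgens c) (L 5) + (6) * lin (comb Bgens c) (L 6) + (-6) * lin (comb Bgens c) (L 7) + (6) * lin (comb Bgens c) (L 8) + (-4) * lin (comb Bgens c) (L 11) + (-4) * lin (comb Bgens c) (M 1) + (-20) * lin (comb Bgens c) (M 2) + (12) * lin (comb Bgens c) (M 3) + (4) * lin (comb Bgens c) (M 8) + (4) * lin (comb Bgens c) (M 9)"
    by (simp add: lin_simps comb_eq Bgens_explicit algebra_simps)
  then have C1: "c (L 2) = 0" using E by simp
  have "16 * c (L 3) = (8) * lin (comb Bgens c) (L 2) + (-16) * lin (comb Bgens c) (L 3) + (12) * lin (comb Bgens c) (L 5) + (-4) * lin (comb Bgens c) (L 6) + (4) * lin (comb Bgens c) (L 7) + (-4) * lin (comb Bgens c) (L 8) + (8) * lin (comb Bgens c) (L 11) + (16) * lin (comb Bgens c) (M 2) + (-8) * lin (comb Bgens c) (M 3) + (-8) * lin (comb Bgens c) (M 8) + (8) * lin (comb Bgens c) (M 12)"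
    by (simp add: lin_simps comb_eq Bgens_explicit algebra_simps)
  then have C2: "c (L 3) = 0" using E by simp
  have "16 * c (L 4) = (8) * lin (comb Bgens c) (L 2) + (-16) * lin (comb Bgens c) (L 4) + (12) * lin (comb Bgens c) (L 5) + (-4) * lin (comb Bgens c) (L 6) + (4) * lin (comb Bgens c) (L 7) + (-4) * lin (comb Bgens c) (L 8) + (8) * lin (comb Bgens c) (L 11) + (16) * lin (comb Bgens c) (M 2) + (-8) * lin (comb Bgens c) (M 3) + (8) * lin (comb Bgens c) (M 6) + (-8) * lin (comb Bgens c) (M 9)"
    by (simp add: lin_simps comb_eq Bgens_explicit algebra_simps)
  then have C3: "c (L 4) = 0" using E by simp
  have "16 * c (L 5) = (-10) * lin (comb Bgens c) (L 2) + (12) * lin (comb Bgens c) (L 3) + (12) * lin (comb Bgens c) (L 4) + (-37) * lin (comb Bgens c) (L 5) + (19) * lin (comb Bgens c) (L 6) + (-3) * lin (comb Bgens c) (L 7) + (19) * lin (comb Bgens c) (L 8) + (-18) * lin (comb Bgens c) (L 11) + (14) * lin (comb Bgens c) (M 1) + (-34) * lin (comb Bgens c) (M 2) + (22) * lin (comb Bgens c) (M 3) + (-12) * lin (comb Bgens c) (M 6) + (14) * lin (comb Bgens c) (M 8) + (14) * lin (comb Bgens c) (M 9) + (-12) * lin (comb Bgens c) (M 12)"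
    by (simp add: lin_simps comb_eq Bgens_explicit algebra_simps)
  then have C4: "c (L 5) = 0" using E by simp
  have "16 * c (L 6) = (6) * lin (comb Bgens c) (L 2) + (-4) * lin (comb Bgens c) (L 3) + (-4) * lin (comb Bgens c) (L 4) + (19) * lin (comb Bgens c) (L 5) + (-21) * lin (comb Bgens c) (L 6) + (5) * lin (comb Bgens c) (L 7) + (-5) * lin (comb Bgens c) (L 8) + (14) * lin (comb Bgens c) (L 11) + (-10) * lin (comb Bgens c) (M 1) + (22) * lin (comb Bgens c) (M 2) + (-10) * lin (comb Bgens c) (M 3) + (4) * lin (comb Bgens c) (M 6) + (-2) * lin (comb Bgens c) (M 8) + (-10) * lin (comb Bgens c) (M 9) + (12) * lin (comb Bgens c) (M 12)"
    by (simp add: lin_simps comb_eq Bgens_explicit algebra_simps)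
  then have C5: "c (L 6) = 0" using E by simp
  have "16 * c (L 7) = (-6) * lin (comb Bgens c) (L 2) + (4) * lin (comb Bgens c) (L 3) + (4) * lin (comb Bgens c) (L 4) + (-3) * lin (comb Bgens c) (L 5) + (5) * lin (comb Bgens c) (L 6) + (-21) * lin (comb Bgens c) (L 7) + (5) * lin (comb Bgens c) (L 8) + (2) * lin (comb Bgens c) (L 11) + (2) * lin (comb Bgens c) (M 1) + (-14) * lin (comb Bgens c) (M 2) + (10) * lin (comb Bgens c) (M 3) + (4) * lin (comb Bgens c) (M 6) + (-6) * lin (comb Bgens c) (M 8) + (-6) * lin (comb Bgens c) (M 9) + (4) * lin (comb Bgens c) (M 12)"
    by (simp add: lin_simps comb_eq Bgens_explicit algebra_simps)
  then have C6: "c (L 7) = 0" using E by simp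
  have "16 * c (L 8) = (6) * lin (comb Bgens c) (L 2) + (-4) * lin (comb Bgens c) (L 3) + (-4) * lin (comb Bgens c) (L 4) + (19) * lin (comb Bgens c) (L 5) + (-5) * lin (comb Bgens c) (L 6) + (5) * lin (comb Bgens c) (L 7) + (-21) * lin (comb Bgens c) (L 8) + (14) * lin (comb Bgens c) (L 11) + (-10) * lin (comb Bgens c) (M 1) + (22) * lin (comb Bgens c) (M 2) + (-10) * lin (comb Bgens c) (M 3) + (12) * lin (comb Bgens c) (M 6) + (-10) * lin (comb Bgens c) (M 8) + (-2) * lin (comb Bgens c) (M 9) + (4) * lin (comb Bgens c) (M 12)"
    by (simp add: lin_simps comb_eq Bgens_explicit algebra_simps)
  then have C7: "c (L 8) = 0" using E by simp
  have "16 * c (L 11) = (-4) * lin (comb Bgens c) (L 2) + (8) * lin (comb Bgens c) (L 3) + (8) * lin (comb Bgens c) (L 4) + (-18) * lin (comb Bgens c) (L 5) + (14) * lin (comb Bgens c) (L 6) + (2) * lin (comb Bgens c) (L 7) + (14) * lin (comb Bgens c) (L 8) + (-20) * lin (comb Bgens c) (L 11) + (12) * lin (comb Bgens c) (M 1) + (-20) * lin (comb Bgens c) (M 2) + (12) * lin (comb Bgens c) (M 3) + (-8) * lin (comb Bgens c) (M 6) + (12) * lin (comb Bgens c) (M 8) + (12) * lin (comb Bgens c) (M 9) + (-8) * lin (comb Bgens c) (M 12)"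
    by (simp add: lin_simps comb_eq Bgens_explicit algebra_simps)
  then have C8: "c (L 11) = 0" using E by simp
  have "16 * c (M 1) = (-4) * lin (comb Bgens c) (L 2) + (14) * lin (comb Bgens c) (L 5) + (-10) * lin (comb Bgens c) (L 6) + (2) * lin (comb Bgens c) (L 7) + (-10) * lin (comb Bgens c) (L 8) + (12) * lin (comb Bgens c) (L 11) + (-20) * lin (comb Bgens c) (M 1) + (12) * lin (comb Bgens c) (M 2) + (-4) * lin (comb Bgens c) (M 3) + (8) * lin (comb Bgens c) (M 6) + (-4) * lin (comb Bgens c) (M 8) + (-4) * lin (comb Bgens c) (M 9) + (8) * lin (comb Bgens c) (M 12)"
    by (simp add: lin_simps comb_eq Bgens_explicit algebra_simps)
  then have C9: "c (M 1) = 0" using E by simp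
  have "16 * c (M 2) = (-20) * lin (comb Bgens c) (L 2) + (16) * lin (comb Bgens c) (L 3) + (16) * lin (comb Bgens c) (L 4) + (-34) * lin (comb Bgens c) (L 5) + (22) * lin (comb Bgens c) (L 6) + (-14) * lin (comb Bgens c) (L 7) + (22) * lin (comb Bgens c) (L 8) + (-20) * lin (comb Bgens c) (L 11) + (12) * lin (comb Bgens c) (M 1) + (-52) * lin (comb Bgens c) (M 2) + (28) * lin (comb Bgens c) (M 3) + (-8) * lin (comb Bgens c) (M 6) + (12) * lin (comb Bgens c) (M 8) + (12) * lin (comb Bgens c) (M 9) + (-8) * lin (comb Bgens c) (M 12)"
    by (simp add: lin_simps comb_eq Bgens_explicit algebra_simps)
  then have C10: "c (M 2) = 0" using E by simp
  have "16 * c (M 3) = (12) * lin (comb Bgens c) (L 2) + (-8) * lin (comb Bgens c) (L 3) + (-8) * lin (comb Bgens c) (L 4) + (22) * lin (comb Bgens c) (L 5) + (-10) * lin (comb Bgens c) (L 6) + (10) * lin (comb Bgens c) (L 7) + (-10) * lin (comb Bgens c) (L 8) + (12) * lin (comb Bgens c) (L 11) + (-4) * lin (comb Bgens c) (M 1) + (28) * lin (comb Bgens c) (M 2) + (-20) * lin (comb Bgens c) (M 3) + (8) * lin (comb Bgens c) (M 6) + (-4) * lin (comb Bgens c) (M 8) + (-4) * lin (comb Bgens c) (M 9) + (8) * lin (comb Bgens c) (M 12)"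
    by (simp add: lin_simps comb_eq Bgens_explicit algebra_simps)
  then have C11: "c (M 3) = 0" using E by simp
  have "16 * c (M 6) = (8) * lin (comb Bgens c) (L 4) + (-12) * lin (comb Bgens c) (L 5) + (4) * lin (comb Bgens c) (L 6) + (4) * lin (comb Bgens c) (L 7) + (12) * lin (comb Bgens c) (L 8) + (-8) * lin (comb Bgens c) (L 11) + (8) * lin (comb Bgens c) (M 1) + (-8) * lin (comb Bgens c) (M 2) + (8) * lin (comb Bgens c) (M 3) + (-16) * lin (comb Bgens c) (M 6) + (8) * lin (comb Bgens c) (M 8) + (8) * lin (comb Bgens c) (M 9)"
    by (simp add: lin_simps comb_eq Bgens_explicit algebra_simps)
  then have C12: "c (M 6) = 0" using E by simp
  have "16 * c (M 8) = (4) * lin (comb Bgens c) (L 2) + (-8) * lin (comb Bgens c) (L 3) + (14) * lin (comb Bgens c) (L 5) + (-2) * lin (comb Bgens c) (L 6) + (-6) * lin (comb Bgens c) (L 7) + (-10) * lin (comb Bgens c) (L 8) + (12) * lin (comb Bgens c) (L 11) + (-4) * lin (comb Bgens c) (M 1) + (12) * lin (comb Bgens c) (M 2) + (-4) * lin (comb Bgens c) (M 3) + (8) * lin (comb Bgens c) (M 6) + (-20) * lin (comb Bgens c) (M 8) + (-4) * lin (comb Bgens c) (M 9) + (8) * lin (comb Bgens c) (M 12)"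
    by (simp add: lin_simps comb_eq Bgens_explicit algebra_simps)
  then have C13: "c (M 8) = 0" using E by simp
  have "16 * c (M 9) = (4) * lin (comb Bgens c) (L 2) + (-8) * lin (comb Bgens c) (L 4) + (14) * lin (comb Bgens c) (L 5) + (-10) * lin (comb Bgens c) (L 6) + (-6) * lin (comb Bgens c) (L 7) + (-2) * lin (comb Bgens c) (L 8) + (12) * lin (comb Bgens c) (L 11) + (-4) * lin (comb Bgens c) (M 1) + (12) * lin (comb Bgens c) (M 2) + (-4) * lin (comb Bgens c) (M 3) + (8) * lin (comb Bgens c) (M 6) + (-4) * lin (comb Bgens c) (M 8) + (-20) * lin (comb Bgens c) (M 9) + (8) * lin (comb Bgens c) (M 12)"
    by (simp add: lin_simps comb_eq Bgens_explicit algebra_simps)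
  then have C14: "c (M 9) = 0" using E by simp
  have "16 * c (M 12) = (8) * lin (comb Bgens c) (L 3) + (-12) * lin (comb Bgens c) (L 5) + (12) * lin (comb Bgens c) (L 6) + (4) * lin (comb Bgens c) (L 7) + (4) * lin (comb Bgens c) (L 8) + (-8) * lin (comb Bgens c) (L 11) + (8) * lin (comb Bgens c) (M 1) + (-8) * lin (comb Bgens c) (M 2) + (8) * lin (comb Bgens c) (M 3) + (8) * lin (comb Bgens c) (M 8) + (8) * lin (comb Bgens c) (M 9) + (-16) * lin (comb Bgens c) (M 12)"
    by (simp add: lin_simps comb_eq Bgens_explicit algebra_simps)
  then have C15: "c (M 12) = 0" using E by simp
  show ?thesis using C1 C2 C3 C4 C5 C6 C7 C8 C9 C10 C11 C12 C13 C14 C15 by (simp add: Bgens_explicit)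
qed

definition phiv1 :: "(vtx \<Rightarrow> int) \<Rightarrow> int" where
  "phiv1 a = 16 * a (L 2) - 3 * a (L 3) - a (L 4) - 9 * a (L 5) + a (L 7) + 4 * a (L 8) - 4 * a (L 11) + 10 * a (M 1) + 2 * a (M 2) - 2 * a (M 3) - 8 * a (M 6)"

definition phiv2 :: "(vtx \<Rightarrow> int) \<Rightarrow> int" where
  "phiv2 a = - 4 * a (L 2) + 4 * a (L 5) - 2 * a (L 8) + 2 * a (L 11) - 3 * a (M 1) + a (M 2) + 3 * a (M 6) - a (M 8)"

definition phiv3 :: "(vtx \<Rightarrow> int) \<Rightarrow> int" where
  "phiv3 a = - 5 * a (L 2) + a (L 3) + 4 * a (L 5) - a (L 6) - a (L 7) - 2 * a (L 8) + 2 * a (L 11) - 4 * a (M 1) + 3 * a (M 6) - a (M 8) - a (M 9) + a (M 12)"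

definition phiv4 :: "(vtx \<Rightarrow> int) \<Rightarrow> int" where
  "phiv4 a = - 2 * a (L 3) - 2 * a (L 4) + 8 * a (L 5) - 4 * a (L 6) - 4 * a (L 8) + 4 * a (L 11) - 4 * a (M 1) + 6 * a (M 2) - 4 * a (M 3) + 3 * a (M 6) - 3 * a (M 8) - 3 * a (M 9) + 3 * a (M 12)"

definition phiv5 :: "(vtx \<Rightarrow> int) \<Rightarrow> int" where
  "phiv5 a = - 10 * a (L 2) + 12 * a (L 3) + 12 * a (L 4) - 37 * a (L 5) + 19 * a (L 6) - 3 * a (L 7) + 19 * a (L 8) - 18 * a (L 11) + 14 * a (M 1) - 34 * a (M 2) + 22 * a (M 3) - 12 * a (M 6) + 14 * a (M 8) + 14 * a (M 9) - 12 * a (M 12)"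

definition alpha :: "int \<Rightarrow> int \<Rightarrow> int \<Rightarrow> int \<Rightarrow> int \<Rightarrow> vtx \<Rightarrow> int" where
  "alpha a1 a2 a3 a4 a5 w = (if w = L 1 then (-28) * a1 + (10) * a2 + (-42) * a3 + (34) * a4 + (5) * a5 else if w = L 2 then 0 else if w = L 3 then 0 else if w = L 4 then 0 else if w = L 5 then 0 else if w = L 6 then (-57) * a1 + (20) * a2 + (-87) * a3 + (69) * a4 + (10) * a5 else if w = L 7 then (-23) * a1 + (8) * a2 + (-36) * a3 + (28) * a4 + (4) * a5 else if w = L 8 then (6) * a1 + (-2) * a2 + (9) * a3 + (-7) * a4 + (-1) * a5 else if w = L 9 then (-23) * a1 + (7) * a2 + (-35) * a3 + (28) * a4 + (4) * a5 else if w = L 10 then (-45) * a1 + (16) * a2 + (-68) * a3 + (55) * a4 + (8) * a5 else if w = L 11 then 0 else if w = L 12 then (6) * a1 + (-1) * a2 + (9) * a3 + (-7) * a4 + (-1) * a5 else if w = M 1 then 0 else if w = M 2 then 0 else if w = M 3 then 0 else if w = M 4 then (-28) * a1 + (10) * a2 + (-42) * a3 + (34) * a4 + (5) * a5 else if w = M 5 then (-6) * a1 + (1) * a2 + (-9) * a3 + (7) * a4 + (1) * a5 else if w = M 6 then 0 else if w = M 7 then (-34) * a1 + (12) * a2 + (-51) * a3 + (41) * a4 + (6) * a5 else if w = M 8 then (-12) * a1 + (3) * a2 + (-18) * a3 + (14) * a4 + (2) * a5 else if w = M 9 then (54) * a1 + (-18) * a2 + (81) * a3 + (-63) * a4 +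 (-9) * a5 else if w = M 10 then (-3) * a1 + (2) * a2 + (-6) * a3 + (6) * a4 + (1) * a5 else if w = M 11 then (3) * a1 + (-1) * a2 + (4) * a3 + (-1) * a4 else if w = M 12 then (-26) * a1 + (9) * a2 + (-41) * a3 + (34) * a4 + (5) * a5 else 0)"

definition yvec :: "int \<Rightarrow> int \<Rightarrow> int \<Rightarrow> int \<Rightarrow> int \<Rightarrow> vtx \<Rightarrow> int" where
  "yvec a1 a2 a3 a4 a5 w = (if w = L 2 then (8) * a4 + (2) * a5 else if w = L 3 then (8) * a2 + (-16) * a3 + (24) * a4 + (4) * a5 else if w = L 4 then (-320) * a1 + (104) * a2 + (-480) * a3 + (368) * a4 + (52) * a5 else if w = L 5 then (1) * a5 else if w = L 6 then (224) * a1 + (-88) * a2 + (336) * a3 + (-264) * a4 + (-39) * a5 else if w = L 7 then (-128) * a1 + (48) * a2 + (-176) * a3 + (152) * a4 + (23) * a5 else if w = L 8 then (-48) * a1 + (24) * a2 + (-80) * a3 + (64) * a4 + (9) * a5 else if w = L 11 then (-48) * a1 + (16) * a2 + (-80) * a3 + (64) * a4 + (10) * a5 else if w = M 1 then (88) * a1 + (-32) * a2 + (128) * a3 + (-96) * a4 + (-14) * a5 else if w = M 2 then (-88) * a1 + (32) * a2 + (-128) * a3 + (112) * a4 + (18) * a5 else if w = M 3 then (-96) * a1 + (32) * a2 + (-160) * a3 + (128) * a4 + (18) * a5 else if w = M 6 then (88) * a1 + (-32) * a2 + (120) * a3 + (-88) * a4 + (-12) * a5 else if w = M 8 then (8) *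 a1 + (16) * a2 + (8) * a3 + (8) * a4 + (2) * a5 else if w = M 9 then (-544) * a1 + (176) * a2 + (-808) * a3 + (632) * a4 + (90) * a5 else if w = M 12 then (8) * a3 + (-24) * a4 + (-4) * a5 else 0)"

lemma yvec_Z: "yvec a1 a2 a3 a4 a5 \<in> ZGamma"
  by (simp add: ZGamma_def yvec_def Vs_def)

lemma yvec_lin: "\<forall>u\<in>Vs. 16 * alpha a1 a2 a3 a4 a5 u = lin (yvec a1 a2 a3 a4 a5) u"
  by (simp add: Vs_explicit lin_simps yvec_def alpha_def algebra_simps)

lemma phiv1_alpha: "phiv1 (alpha a1 a2 a3 a4 a5) = a1"
  by (simp add: phiv1_def alpha_def algebra_simps)

lemma phiv2_alpha: "phiv2 (alpha a1 a2 a3 a4 a5) = a2"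
  by (simp add: phiv2_def alpha_def algebra_simps)

lemma phiv3_alpha: "phiv3 (alpha a1 a2 a3 a4 a5) = a3"
  by (simp add: phiv3_def alpha_def algebra_simps)

lemma phiv4_alpha: "phiv4 (alpha a1 a2 a3 a4 a5) = a4"
  by (simp add: phiv4_def alpha_def algebra_simps)

lemma phiv5_alpha: "phiv5 (alpha a1 a2 a3 a4 a5) = a5"
  by (simp add: phiv5_def alpha_def algebra_simps)

lemma phiv1_lin: "phiv1 (lin x) = 2 * (2 * x (L 1) - 10 * x (L 2) - 2 * x (L 3) + 6 * x (L 5) + x (L 9) + 5 * x (L 12) - 6 * x (M 4) + 3 * x (M 5) + 8 * x (M 7) + x (M 8) + 4 * x (M 10) + 5 * x (M 11) - 5 * x (M 12))"
  by (simp add: phiv1_def lin_simps algebra_simps)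

lemma phiv2_lin: "phiv2 (lin x) = 2 * (3 * x (L 2) + x (L 3) - 2 * x (L 5) - 2 * x (L 12) + 2 * x (M 4) - 2 * x (M 7) - x (M 10) - x (M 11) + 2 * x (M 12))"
  by (simp add: phiv2_def lin_simps algebra_simps)

lemma phiv3_lin: "phiv3 (lin x) = 2 * (- x (L 1) + 3 * x (L 2) - 2 * x (L 5) - x (L 9) - x (L 10) - 2 * x (L 12) + 2 * x (M 4) - x (M 5) - 3 * x (M 7) - x (M 10) - 2 * x (M 11) + x (M 12))"
  by (simp add: phiv3_def lin_simps algebra_simps)

lemma phiv4_lin: "phiv4 (lin x) = 2 * (x (L 1) + x (L 2) - 2 * x (L 5) - 2 * x (L 9) - 2 * x (L 10) - 2 * x (L 12) + 2 * x (M 4) + x (M 5) - x (M 7) + x (M 10) - x (M 11))"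
  by (simp add: phiv4_def lin_simps algebra_simps)

lemma phiv5_lin: "phiv5 (lin x) = 16 * (- x (L 1) + x (L 5) + x (L 9) + x (L 10) + x (L 12) - x (M 4) - x (M 5) - x (M 10))"
  by (simp add: phiv5_def lin_simps algebra_simps)

definition rv_L1 :: "vtx \<Rightarrow> int" where
  "rv_L1 = (\<lambda>w. (if w = L 1 then 1 else if w = L 2 then 1 else if w = L 3 then -1 else if w = L 4 then -1 else if w = L 5 then 1 else if w = L 6 then -1 else if w = L 7 then 1 else if w = L 8 then -1 else if w = M 2 then 2 else if w = M 3 then -2 else 0))"

lemma rv_L1_rad: "rv_L1 \<in> rad"
  unfolding rad_iff
  apply (rule conjI)
   apply (force simp: ZGamma_def Vs_def rv_L1_def)
  apply (simp add: Vs_explicit lin_simps rv_L1_def)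
  done

definition rv_L9 :: "vtx \<Rightarrow> int" where
  "rv_L9 = (\<lambda>w. (if w = L 9 then 1 else if w = L 5 then -1 else if w = L 6 then 1 else if w = L 11 then -1 else if w = M 1 then 1 else if w = M 2 then -1 else if w = M 9 then 1 else if w = M 12 then -1 else 0))"

lemma rv_L9_rad: "rv_L9 \<in> rad"
  unfolding rad_iff
  apply (rule conjI)
   apply (force simp: ZGamma_def Vs_def rv_L9_def)
  apply (simp add: Vs_explicit lin_simps rv_L9_def)
  done

definition rv_L10 :: "vtx \<Rightarrow> int" where
  "rv_L10 = (\<lambda>w. (if w = L 10 then 1 else if w = L 5 then -1 else if w = L 7 then 1 else if w = L 11 then -1 else if w = M 6 then -1 else if w = M 8 then 1 else if w = M 9 then 1 else if w = M 12 then -1 else 0))"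

lemma rv_L10_rad: "rv_L10 \<in> rad"
  unfolding rad_iff
  apply (rule conjI)
   apply (force simp: ZGamma_def Vs_def rv_L10_def)
  apply (simp add: Vs_explicit lin_simps rv_L10_def)
  done

definition rv_L12 :: "vtx \<Rightarrow> int" where
  "rv_L12 = (\<lambda>w. (if w = L 12 then 1 else if w = L 5 then -1 else if w = L 8 then 1 else if w = L 11 then -1 else if w = M 1 then 1 else if w = M 2 then -1 else if w = M 6 then -1 else if w = M 8 then 1 else 0))"

lemma rv_L12_rad: "rv_L12 \<in> rad"
  unfolding rad_iff
  apply (rule conjI)
   apply (force simp: ZGamma_def Vs_def rv_L12_def)
  apply (simp add: Vs_explicit lin_simps rv_L12_def)
  done

definition rv_M4 :: "vtx \<Rightarrow> int" where
  "rv_M4 = (\<lambda>w. (if w = M 4 then 1 else if w = L 5 then 1 else if w = L 6 then -1 else if w = L 7 then 1 else if w = L 8 then -1 else if w = M 1 then -1 else if w = M 2 then 1 else if w = M 3 then -1 else 0))"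

lemma rv_M4_rad: "rv_M4 \<in> rad"
  unfolding rad_iff
  apply (rule conjI)
   apply (force simp: ZGamma_def Vs_def rv_M4_def)
  apply (simp add: Vs_explicit lin_simps rv_M4_def)
  done

definition rv_M5 :: "vtx \<Rightarrow> int" where
  "rv_M5 = (\<lambda>w. (if w = M 5 then 1 else if w = L 2 then 1 else if w = L 3 then -1 else if w = L 5 then 1 else if w = L 8 then -1 else if w = M 2 then 1 else if w = M 3 then -1 else if w = M 8 then -1 else 0))"

lemma rv_M5_rad: "rv_M5 \<in> rad"
  unfolding rad_iff
  apply (rule conjI)
   apply (force simp: ZGamma_def Vs_def rv_M5_def)
  apply (simp add: Vs_explicit lin_simps rv_M5_def)
  done

definition rv_M7 :: "vtx \<Rightarrow> int" where
  "rv_M7 = (\<lambda>w. (if w = M 7 then 1 else if w = L 2 then 1 else if w = L 3 then -1 else if w = L 6 then -1 else if w = L 7 then 1 else if w = M 2 then 1 else if w = M 3 then -1 else if w = M 6 then -1 else 0))"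

lemma rv_M7_rad: "rv_M7 \<in> rad"
  unfolding rad_iff
  apply (rule conjI)
   apply (force simp: ZGamma_def Vs_def rv_M7_def)
  apply (simp add: Vs_explicit lin_simps rv_M7_def)
  done

definition rv_M10 :: "vtx \<Rightarrow> int" where
  "rv_M10 = (\<lambda>w. (if w = M 10 then 1 else if w = L 2 then 1 else if w = L 4 then -1 else if w = L 5 then 1 else if w = L 6 then -1 else if w = M 2 then 1 else if w = M 3 then -1 else if w = M 9 then -1 else 0))"

lemma rv_M10_rad: "rv_M10 \<in> rad"
  unfolding rad_iff
  apply (rule conjI)
   apply (force simp: ZGamma_def Vs_def rv_M10_def)
  apply (simp add: Vs_explicit lin_simps rv_M10_def)
  done

definition rv_M11 :: "vtx \<Rightarrow> int" where
  "rv_M11 = (\<lambda>w. (if w = M 11 then 1 else if w = L 2 then 1 else if w = L 4 then -1 else if w = L 7 then 1 else if w = L 8 then -1 else if w = M 2 then 1 else if w = M 3 then -1 else if w = M 12 then -1 else 0))"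

lemma rv_M11_rad: "rv_M11 \<in> rad"
  unfolding rad_iff
  apply (rule conjI)
   apply (force simp: ZGamma_def Vs_def rv_M11_def)
  apply (simp add: Vs_explicit lin_simps rv_M11_def)
  done

definition xvec :: "(vtx \<Rightarrow> int) \<Rightarrow> int \<Rightarrow> int \<Rightarrow> int \<Rightarrow> int \<Rightarrow> int \<Rightarrow> vtx \<Rightarrow> int" where
  "xvec a k1 k2 k3 k4 k5 w = (if w = L 2 then (1) * k4 + (2) * k5 else if w = L 3 then (1) * k2 + (-2) * k3 + (3) * k4 + (4) * k5 else if w = L 4 then (229) * a (L 2) + (-23) * a (L 3) + (-14) * a (L 4) + (-149) * a (L 5) + (63) * a (L 8) + (-66) * a (L 11) + (146) * a (M 1) + (7) * a (M 2) + (-20) * a (M 3) + (-119) * a (M 6) + (-7) * a (M 9) + (-40) * k1 + (13) * k2 + (-60) * k3 + (46) * k4 + (52) * k5 else if w = L 5 then (1) * k5 else if w = L 6 then (-165) * a (L 2) + (17) * a (L 3) + (10) * a (L 4) + (107) * a (L 5) + (-45) * a (L 8) + (48) * a (L 11) + (-105) * a (M 1) + (-5) * a (M 2) + (15) * a (M 3) + (86) * a (M 6) + (5) * a (M 9) + (28) * k1 + (-11) * k2 + (42) * k3 + (-33) * k4 + (-39) * k5 else if w = L 7 then (99) * a (L 2) + (-11) * a (L 3) + (-6) * a (L 4) + (-63) * a (L 5) + (27) * a (L 8) + (-28) * a (L 11) + (63) * a (M 1) + (4) * a (M 2) + (-9) * a (M 3) + (-51) * a (M 6) + (-3) * a (M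 9) + (-16) * k1 + (6) * k2 + (-22) * k3 + (19) * k4 + (23) * k5 else if w = L 8 then (35) * a (L 2) + (-3) * a (L 3) + (-2) * a (L 4) + (-23) * a (L 5) + (9) * a (L 8) + (-10) * a (L 11) + (22) * a (M 1) + (1) * a (M 2) + (-3) * a (M 3) + (-18) * a (M 6) + (-1) * a (M 9) + (-6) * k1 + (3) * k2 + (-10) * k3 + (8) * k4 + (9) * k5 else if w = L 11 then (33) * a (L 2) + (-3) * a (L 3) + (-2) * a (L 4) + (-21) * a (L 5) + (9) * a (L 8) + (-10) * a (L 11) + (21) * a (M 1) + (1) * a (M 2) + (-3) * a (M 3) + (-17) * a (M 6) + (-1) * a (M 9) + (-6) * k1 + (2) * k2 + (-10) * k3 + (8) * k4 + (10) * k5 else if w = M 1 then (-65) * a (L 2) + (7) * a (L 3) + (4) * a (L 4) + (42) * a (L 5) + (-18) * a (L 8) + (19) * a (L 11) + (-42) * a (M 1) + (-2) * a (M 2) + (6) * a (M 3) + (34) * a (M 6) + (2) * a (M 9) + (11) * k1 + (-4) * k2 + (16) * k3 + (-12) * k4 + (-14) * k5 else if w = M 2 then (66) * a (L 2) + (-7) * a (L 3) + (-4) * a (L 4) + (-42) * a (L 5) + (18) * a (L 8) + (-19) * a (L 11) + (42) * a (M 1) + (2) * a (M 2) + (-6) * a (M 3) + (-34) * a (M 6) + (-2) * a (M 9) + (-11) * k1 + (4) * k2 + (-16) * k3 + (14) * k4 + (18) * k5 else if w = M 3 then (66) * a (L 2) + (-6) * a (L 3) + (-4) * a (L 4) + (-43)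 * a (L 5) + (18) * a (L 8) + (-19) * a (L 11) + (42) * a (M 1) + (2) * a (M 2) + (-6) * a (M 3) + (-34) * a (M 6) + (-2) * a (M 9) + (-12) * k1 + (4) * k2 + (-20) * k3 + (16) * k4 + (18) * k5 else if w = M 6 then (-66) * a (L 2) + (7) * a (L 3) + (4) * a (L 4) + (43) * a (L 5) + (-18) * a (L 8) + (19) * a (L 11) + (-42) * a (M 1) + (-2) * a (M 2) + (6) * a (M 3) + (34) * a (M 6) + (2) * a (M 9) + (11) * k1 + (-4) * k2 + (15) * k3 + (-11) * k4 + (-12) * k5 else if w = M 8 then (1) * k1 + (2) * k2 + (1) * k3 + (1) * k4 + (2) * k5 else if w = M 9 then (392) * a (L 2) + (-40) * a (L 3) + (-23) * a (L 4) + (-255) * a (L 5) + (108) * a (L 8) + (-113) * a (L 11) + (250) * a (M 1) + (12) * a (M 2) + (-34) * a (M 3) + (-204) * a (M 6) + (-12) * a (M 9) + (-68) * k1 + (22) * k2 + (-101) * k3 + (79) * k4 + (90) * k5 else if w = M 12 then (1) * k3 + (-3) * k4 + (-4) * k5 else 0)"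

lemma xvec_Z: "xvec a k1 k2 k3 k4 k5 \<in> ZGamma"
  by (simp add: ZGamma_def xvec_def Vs_def)

lemma kernel_construct:
  assumes R: "a (L 1) = - a (L 2) + a (L 3) + a (L 4) - a (L 5) + a (L 6) - a (L 7) + a (L 8) - 2 * a (M 2) + 2 * a (M 3)" "a (L 9) = a (L 5) - a (L 6) + a (L 11) - a (M 1) + a (M 2) - a (M 9) + a (M 12)" "a (L 10) = a (L 5) - a (L 7) + a (L 11) + a (M 6) - a (M 8) - a (M 9) + a (M 12)" "a (L 12) = a (L 5) - a (L 8) + a (L 11) - a (M 1) + a (M 2) + a (M 6) - a (M 8)" "a (M 4) = - a (L 5) + a (L 6) - a (L 7) + a (L 8) + a (M 1) - a (M 2) + a (M 3)" "a (M 5) = - a (L 2) + a (L 3) - a (L 5) + a (L 8) - a (M 2) + a (M 3) + a (M 8)" "a (M 7) = - a (L 2) + a (L 3) + a (L 6) - a (L 7) - a (M 2) + a (M 3) + a (M 6)" "a (M 10) = - a (L 2) + a (L 4) - a (L 5) + a (L 6) - a (M 2) + a (M 3) + a (M 9)" "a (M 11) = - a (L 2) + a (L 4) - a (L 7) + a (L 8) - a (M 2) + a (M 3) + a (M 12)"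
    and K: "phiv1 a = 2 * k1" "phiv2 a = 2 * k2" "phiv3 a = 2 * k3" "phiv4 a = 2 * k4" "phiv5 a = 16 * k5"
  shows "\<forall>v\<in>Vs. lin (xvec a k1 k2 k3 k4 k5) v = a v"
proof -
  have X0: "lin (xvec a k1 k2 k3 k4 k5) (L 1) = (- a (L 2) + a (L 3) + a (L 4) - a (L 5) + a (L 6) - a (L 7) + a (L 8) - 2 * a (M 2) + 2 * a (M 3)) + (-28) * (2 * k1 - phiv1 a) + (10) * (2 * k2 - phiv2 a) + (-42) * (2 * k3 - phiv3 a) + (34) * (2 * k4 - phiv4 a) + (5) * (16 * k5 - phiv5 a)"
    by (simp add: lin_simps xvec_def phiv1_def phiv2_def phiv3_def phiv4_def phiv5_def algebra_simps)
  have X1: "lin (xvec a k1 k2 k3 k4 k5) (L 2) = a (L 2) + 0"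
    by (simp add: lin_simps xvec_def phiv1_def phiv2_def phiv3_def phiv4_def phiv5_def algebra_simps)
  have X2: "lin (xvec a k1 k2 k3 k4 k5) (L 3) = a (L 3) + 0"
    by (simp add: lin_simps xvec_def phiv1_def phiv2_def phiv3_def phiv4_def phiv5_def algebra_simps)
  have X3: "lin (xvec a k1 k2 k3 k4 k5) (L 4) = a (L 4) + 0"
    by (simp add: lin_simps xvec_def phiv1_def phiv2_def phiv3_def phiv4_def phiv5_def algebra_simps)
  have X4: "lin (xvec a k1 k2 k3 k4 k5) (L 5) = a (L 5) + 0"
    by (simp add: lin_simps xvec_def phiv1_def phiv2_def phiv3_def phiv4_def phiv5_def algebra_simps)
  have X5: "lin (xvec a k1 k2 k3 k4 k5) (L 6) = a (L 6) + (-57) * (2 * k1 - phiv1 a) + (20) * (2 * k2 - phiv2 a) + (-87) * (2 * k3 - phiv3 a) + (69) * (2 * k4 - phiv4 a) + (10) * (16 * k5 - phiv5 a)"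
    by (simp add: lin_simps xvec_def phiv1_def phiv2_def phiv3_def phiv4_def phiv5_def algebra_simps)
  have X6: "lin (xvec a k1 k2 k3 k4 k5) (L 7) = a (L 7) + (-23) * (2 * k1 - phiv1 a) + (8) * (2 * k2 - phiv2 a) + (-36) * (2 * k3 - phiv3 a) + (28) * (2 * k4 - phiv4 a) + (4) * (16 * k5 - phiv5 a)"
    by (simp add: lin_simps xvec_def phiv1_def phiv2_def phiv3_def phiv4_def phiv5_def algebra_simps)
  have X7: "lin (xvec a k1 k2 k3 k4 k5) (L 8) = a (L 8) + (6) * (2 * k1 - phiv1 a) + (-2) * (2 * k2 - phiv2 a) + (9) * (2 * k3 - phiv3 a) + (-7) * (2 * k4 - phiv4 a) + (-1) * (16 * k5 - phiv5 a)"
    by (simp add: lin_simps xvec_def phiv1_def phiv2_def phiv3_def phiv4_def phiv5_def algebra_simps)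
  have X8: "lin (xvec a k1 k2 k3 k4 k5) (L 9) = (a (L 5) - a (L 6) + a (L 11) - a (M 1) + a (M 2) - a (M 9) + a (M 12)) + (-23) * (2 * k1 - phiv1 a) + (7) * (2 * k2 - phiv2 a) + (-35) * (2 * k3 - phiv3 a) + (28) * (2 * k4 - phiv4 a) + (4) * (16 * k5 - phiv5 a)"
    by (simp add: lin_simps xvec_def phiv1_def phiv2_def phiv3_def phiv4_def phiv5_def algebra_simps)
  have X9: "lin (xvec a k1 k2 k3 k4 k5) (L 10) = (a (L 5) - a (L 7) + a (L 11) + a (M 6) - a (M 8) - a (M 9) + a (M 12)) + (-45) * (2 * k1 - phiv1 a) + (16) * (2 * k2 - phiv2 a) + (-68) * (2 * k3 - phiv3 a) + (55) * (2 * k4 - phiv4 a) + (8) * (16 * k5 - phiv5 a)"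
    by (simp add: lin_simps xvec_def phiv1_def phiv2_def phiv3_def phiv4_def phiv5_def algebra_simps)
  have X10: "lin (xvec a k1 k2 k3 k4 k5) (L 11) = a (L 11) + 0"
    by (simp add: lin_simps xvec_def phiv1_def phiv2_def phiv3_def phiv4_def phiv5_def algebra_simps)
  have X11: "lin (xvec a k1 k2 k3 k4 k5) (L 12) = (a (L 5) - a (L 8) + a (L 11) - a (M 1) + a (M 2) + a (M 6) - a (M 8)) + (6) * (2 * k1 - phiv1 a) + (-1) * (2 * k2 - phiv2 a) + (9) * (2 * k3 - phiv3 a) + (-7) * (2 * k4 - phiv4 a) + (-1) * (16 * k5 - phiv5 a)"
    by (simp add: lin_simps xvec_def phiv1_def phiv2_def phiv3_def phiv4_def phiv5_def algebra_simps)
  have X12: "lin (xvec a k1 k2 k3 k4 k5) (M 1) = a (M 1) + 0"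
    by (simp add: lin_simps xvec_def phiv1_def phiv2_def phiv3_def phiv4_def phiv5_def algebra_simps)
  have X13: "lin (xvec a k1 k2 k3 k4 k5) (M 2) = a (M 2) + 0"
    by (simp add: lin_simps xvec_def phiv1_def phiv2_def phiv3_def phiv4_def phiv5_def algebra_simps)
  have X14: "lin (xvec a k1 k2 k3 k4 k5) (M 3) = a (M 3) + 0"
    by (simp add: lin_simps xvec_def phiv1_def phiv2_def phiv3_def phiv4_def phiv5_def algebra_simps)
  have X15: "lin (xvec a k1 k2 k3 k4 k5) (M 4) = (- a (L 5) + a (L 6) - a (L 7) + a (L 8) + a (M 1) - a (M 2) + a (M 3)) + (-28) * (2 * k1 - phiv1 a) + (10) * (2 * k2 - phiv2 a) + (-42) * (2 * k3 - phiv3 a) + (34) * (2 * k4 - phiv4 a) + (5) * (16 * k5 - phiv5 a)"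
    by (simp add: lin_simps xvec_def phiv1_def phiv2_def phiv3_def phiv4_def phiv5_def algebra_simps)
  have X16: "lin (xvec a k1 k2 k3 k4 k5) (M 5) = (- a (L 2) + a (L 3) - a (L 5) + a (L 8) - a (M 2) + a (M 3) + a (M 8)) + (-6) * (2 * k1 - phiv1 a) + (1) * (2 * k2 - phiv2 a) + (-9) * (2 * k3 - phiv3 a) + (7) * (2 * k4 - phiv4 a) + (1) * (16 * k5 - phiv5 a)"
    by (simp add: lin_simps xvec_def phiv1_def phiv2_def phiv3_def phiv4_def phiv5_def algebra_simps)
  have X17: "lin (xvec a k1 k2 k3 k4 k5) (M 6) = a (M 6) + 0"
    by (simp add: lin_simps xvec_def phiv1_def phiv2_def phiv3_def phiv4_def phiv5_def algebra_simps)
  have X18: "lin (xvec a k1 k2 k3 k4 k5) (M 7) = (- a (L 2) + a (L 3) + a (L 6) - a (L 7) - a (M 2) + a (M 3) + a (M 6)) + (-34) * (2 * k1 - phiv1 a) + (12) * (2 * k2 - phiv2 a) + (-51) * (2 * k3 - phiv3 a) + (41) * (2 * k4 - phiv4 a) + (6) * (16 * k5 - phiv5 a)"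
    by (simp add: lin_simps xvec_def phiv1_def phiv2_def phiv3_def phiv4_def phiv5_def algebra_simps)
  have X19: "lin (xvec a k1 k2 k3 k4 k5) (M 8) = a (M 8) + (-12) * (2 * k1 - phiv1 a) + (3) * (2 * k2 - phiv2 a) + (-18) * (2 * k3 - phiv3 a) + (14) * (2 * k4 - phiv4 a) + (2) * (16 * k5 - phiv5 a)"
    by (simp add: lin_simps xvec_def phiv1_def phiv2_def phiv3_def phiv4_def phiv5_def algebra_simps)
  have X20: "lin (xvec a k1 k2 k3 k4 k5) (M 9) = a (M 9) + (54) * (2 * k1 - phiv1 a) + (-18) * (2 * k2 - phiv2 a) + (81) * (2 * k3 - phiv3 a) + (-63) * (2 * k4 - phiv4 a) + (-9) * (16 * k5 - phiv5 a)"
    by (simp add: lin_simps xvec_def phiv1_def phiv2_def phiv3_def phiv4_def phiv5_def algebra_simps)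
  have X21: "lin (xvec a k1 k2 k3 k4 k5) (M 10) = (- a (L 2) + a (L 4) - a (L 5) + a (L 6) - a (M 2) + a (M 3) + a (M 9)) + (-3) * (2 * k1 - phiv1 a) + (2) * (2 * k2 - phiv2 a) + (-6) * (2 * k3 - phiv3 a) + (6) * (2 * k4 - phiv4 a) + (1) * (16 * k5 - phiv5 a)"
    by (simp add: lin_simps xvec_def phiv1_def phiv2_def phiv3_def phiv4_def phiv5_def algebra_simps)
  have X22: "lin (xvec a k1 k2 k3 k4 k5) (M 11) = (- a (L 2) + a (L 4) - a (L 7) + a (L 8) - a (M 2) + a (M 3) + a (M 12)) + (3) * (2 * k1 - phiv1 a) + (-1) * (2 * k2 - phiv2 a) + (4) * (2 * k3 - phiv3 a) + (-1) * (2 * k4 - phiv4 a)"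
    by (simp add: lin_simps xvec_def phiv1_def phiv2_def phiv3_def phiv4_def phiv5_def algebra_simps)
  have X23: "lin (xvec a k1 k2 k3 k4 k5) (M 12) = a (M 12) + (-26) * (2 * k1 - phiv1 a) + (9) * (2 * k2 - phiv2 a) + (-41) * (2 * k3 - phiv3 a) + (34) * (2 * k4 - phiv4 a) + (5) * (16 * k5 - phiv5 a)"
    by (simp add: lin_simps xvec_def phiv1_def phiv2_def phiv3_def phiv4_def phiv5_def algebra_simps)
  show ?thesis using X0 X1 X2 X3 X4 X5 X6 X7 X8 X9 X10 X11 X12 X13 X14 X15 X16 X17 X18 X19 X20 X21 X22 X23 R K by (simp add: Vs_explicit)
qed

lemma freely: "freely_generates_S Bgens"
  unfolding freely_generates_S_def using part_a part_b by blast

lemma group_dual: "group dual_group"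
proof (rule groupI)
  fix x y assume "x \<in> carrier dual_group" "y \<in> carrier dual_group"
  then show "x \<otimes>\<^bsub>dual_group\<^esub> y \<in> carrier dual_group"
    by (simp add: dual_group_def Sdual_def algebra_simps)
next
  show "\<one>\<^bsub>dual_group\<^esub> \<in> carrier dual_group"
    by (simp add: dual_group_def Sdual_def)
next
  fix x y z
  show "x \<otimes>\<^bsub>dual_group\<^esub> y \<otimes>\<^bsub>dual_group\<^esub> z = x \<otimes>\<^bsub>dual_group\<^esub> (y \<otimes>\<^bsub>dual_group\<^esub> z)"
    by (simp add: dual_group_def add.assoc)
next
  fix x show "\<one>\<^bsub>dual_group\<^esub> \<otimes>\<^bsub>dual_group\<^esub> x = x"
    by (simp add: dual_group_def)
next
  fix x assume x: "x \<in> carrier dual_group"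
  show "\<exists>y\<in>carrier dual_group. y \<otimes>\<^bsub>dual_group\<^esub> x = \<one>\<^bsub>dual_group\<^esub>"
  proof (intro bexI)
    show "(\<lambda>z. - x z) \<otimes>\<^bsub>dual_group\<^esub> x = \<one>\<^bsub>dual_group\<^esub>"
      by (simp add: dual_group_def)
    show "(\<lambda>z. - x z) \<in> carrier dual_group"
      using x by (simp add: dual_group_def Sdual_def algebra_simps)
  qed
qed

abbreviation Hgrp where
  "Hgrp \<equiv> integer_mod_group 2 \<times>\<times> integer_mod_group 2 \<times>\<times> integer_mod_group 2 \<times>\<times>
            integer_mod_group 2 \<times>\<times> integer_mod_group 16"

lemma group_H: "group Hgrp"
  by (intro DirProd_group group_integer_mod_group)

definition hmap :: "((vtx \<Rightarrow> int) \<Rightarrow> int) \<Rightarrow> int \<times> int \<times> int \<times> int \<times> int" where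
  "hmap f = (phiv1 (\<lambda>v. f (e v)) mod 2, phiv2 (\<lambda>v. f (e v)) mod 2, phiv3 (\<lambda>v. f (e v)) mod 2,
             phiv4 (\<lambda>v. f (e v)) mod 2, phiv5 (\<lambda>v. f (e v)) mod 16)"

lemma phiv_add:
  "phiv1 (\<lambda>v. a v + b v) = phiv1 a + phiv1 b"
  "phiv2 (\<lambda>v. a v + b v) = phiv2 a + phiv2 b"
  "phiv3 (\<lambda>v. a v + b v) = phiv3 a + phiv3 b"
  "phiv4 (\<lambda>v. a v + b v) = phiv4 a + phiv4 b"
  "phiv5 (\<lambda>v. a v + b v) = phiv5 a + phiv5 b"
  by (simp_all add: phiv1_def phiv2_def phiv3_def phiv4_def phiv5_def algebra_simps)

lemma hmap_hom: "hmap \<in> hom dual_group Hgrp"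
proof (rule homI)
  fix x assume "x \<in> carrier dual_group"
  show "hmap x \<in> carrier Hgrp"
    by (simp add: hmap_def carrier_integer_mod_group)
next
  fix x y assume "x \<in> carrier dual_group" "y \<in> carrier dual_group"
  show "hmap (x \<otimes>\<^bsub>dual_group\<^esub> y) = hmap x \<otimes>\<^bsub>Hgrp\<^esub> hmap y"
    by (simp add: hmap_def dual_group_def phiv_add mod_add_eq)
qed

lemma group_hom_h: "group_hom dual_group Hgrp hmap"
  by (simp add: group_hom_def group_hom_axioms_def group_dual group_H hmap_hom)

definition fv :: "(vtx \<Rightarrow> int) \<Rightarrow> (vtx \<Rightarrow> int) \<Rightarrow> int" where
  "fv \<alpha> = (\<lambda>x. if x \<in> ZGamma then (\<Sum>v\<in>Vs. x v * \<alpha> v) else 0)"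

lemma fv_Sdual:
  assumes y: "y \<in> ZGamma" and m: "\<forall>u\<in>Vs. m * \<alpha> u = lin y u" and m0: "(m::int) \<noteq> 0"
  shows "fv \<alpha> \<in> Sdual"
  unfolding Sdual_def
proof (intro CollectI conjI ballI allI impI)
  fix x z assume "x \<in> ZGamma" "z \<in> ZGamma"
  then show "fv \<alpha> (\<lambda>v. x v + z v) = fv \<alpha> x + fv \<alpha> z"
    by (simp add: fv_def add_in sum.distrib distrib_right)
next
  fix r assume r: "r \<in> rad"
  then have rZ: "r \<in> ZGamma" by (simp add: rad_def)
  have "m * (\<Sum>v\<in>Vs. r v * \<alpha> v) = (\<Sum>v\<in>Vs. r v * (m * \<alpha> v))"
    by (simp add: sum_distrib_left algebra_simps)
  also have "\<dots> = (\<Sum>v\<in>Vs. lin y v * r v)"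
    using m by (intro sum.cong) auto
  also have "\<dots> = form y r" by (simp add: form_lin)
  also have "\<dots> = form r y" by (rule form_sym)
  also have "\<dots> = 0" using r y by (simp add: rad_def)
  finally show "fv \<alpha> r = 0" using m0 rZ by (simp add: fv_def)
next
  fix x assume "x \<notin> ZGamma" then show "fv \<alpha> x = 0" by (simp add: fv_def)
qed

lemma fv_e: "v \<in> Vs \<Longrightarrow> fv \<alpha> (e v) = \<alpha> v"
  using sum_delta_e[of v \<alpha>] by (simp add: fv_def mult.commute)

lemma hmap_onto: "hmap ` carrier dual_group = carrier Hgrp"
proof
  show "hmap ` carrier dual_group \<subseteq> carrier Hgrp"
    using hmap_hom unfolding hom_def Pi_def by blast
next
  show "carrier Hgrp \<subseteq> hmap ` carrier dual_group"
  proof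
    fix t assume t: "t \<in> carrier Hgrp"
    obtain a1 a2 a3 a4 a5 where tt: "t = (a1, a2, a3, a4, a5)" by (cases t) auto
    have b: "0 \<le> a1" "a1 < 2" "0 \<le> a2" "a2 < 2" "0 \<le> a3" "a3 < 2" "0 \<le> a4" "a4 < 2"
       "0 \<le> a5" "a5 < 16"
      using t tt by (auto simp: carrier_integer_mod_group)
    let ?f = "fv (alpha a1 a2 a3 a4 a5)"
    have fS: "?f \<in> Sdual"
      by (rule fv_Sdual[OF yvec_Z yvec_lin]) simp
    have fe: "(\<lambda>v. ?f (e v)) = alpha a1 a2 a3 a4 a5"
    proof
      fix v show "?f (e v) = alpha a1 a2 a3 a4 a5 v"
      proof (cases "v \<in> Vs")
        case True then show ?thesis by (simp add: fv_e)
      next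
        case False
        have "e v \<notin> ZGamma" using False by (auto simp: ZGamma_def e_def)
        moreover have "alpha a1 a2 a3 a4 a5 v = 0"
          using False by (auto simp: alpha_def Vs_def)
        ultimately show ?thesis by (simp add: fv_def)
      qed
    qed
    have "hmap ?f = t"
      using b by (simp add: hmap_def fe phiv1_alpha phiv2_alpha phiv3_alpha phiv4_alpha phiv5_alpha tt)
    then show "t \<in> hmap ` carrier dual_group"
      using fS by (force simp: dual_group_def)
  qed
qed

lemma form_add: "form x (\<lambda>v. y v + z v) = form x y + form x z"
  by (simp add: form_lin distrib_left sum.distrib)

lemma kernel_eq: "kernel dual_group Hgrp hmap = S_in_dual"
proof
  show "S_in_dual \<subseteq> kernel dual_group Hgrp hmap"
  proof
    fix f assume "f \<in> S_in_dual"
    then obtain x where x: "x \<in> ZGamma" and f: "f = (\<lambda>y. if y \<in> ZGamma then form x y else 0)"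
      by (auto simp: S_in_dual_def)
    have fS: "f \<in> Sdual"
      unfolding Sdual_def
    proof (intro CollectI conjI ballI allI impI)
      fix y z assume "y \<in> ZGamma" "z \<in> ZGamma"
      then show "f (\<lambda>v. y v + z v) = f y + f z" by (simp add: f add_in form_add)
    next
      fix r assume r: "r \<in> rad"
      then show "f r = 0" using x by (simp add: f rad_def form_sym[of x r])
    next
      fix y assume "y \<notin> ZGamma" then show "f y = 0" by (simp add: f)
    qed
    have fe: "(\<lambda>v. f (e v)) = (\<lambda>v. if v \<in> Vs then lin x v else 0)"
    proof
      fix v show "f (e v) = (if v \<in> Vs then lin x v else 0)"
      proof (cases "v \<in> Vs")
        case True then show ?thesis by (simp add: f form_e)
      next
        case False
        have "e v \<notin> ZGamma" using False by (auto simp: ZGamma_def e_def)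
        then show ?thesis using False by (simp add: f)
      qed
    qed
    have fe2: "(\<lambda>v. f (e v)) = (\<lambda>v. if v \<in> Vs then lin x v else 0)" by (rule fe)
    have P: "phiv1 (\<lambda>v. f (e v)) = phiv1 (lin x)" "phiv2 (\<lambda>v. f (e v)) = phiv2 (lin x)"
      "phiv3 (\<lambda>v. f (e v)) = phiv3 (lin x)" "phiv4 (\<lambda>v. f (e v)) = phiv4 (lin x)"
      "phiv5 (\<lambda>v. f (e v)) = phiv5 (lin x)"
      unfolding fe by (simp_all add: phiv1_def phiv2_def phiv3_def phiv4_def phiv5_def Vs_def)
    have "hmap f = \<one>\<^bsub>Hgrp\<^esub>"
      by (simp add: hmap_def P phiv1_lin phiv2_lin phiv3_lin phiv4_lin phiv5_lin)
    then show "f \<in> kernel dual_group Hgrp hmap"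
      using fS by (simp add: kernel_def dual_group_def)
  qed
next
  show "kernel dual_group Hgrp hmap \<subseteq> S_in_dual"
  proof
    fix f assume fk: "f \<in> kernel dual_group Hgrp hmap"
    then have fS: "f \<in> Sdual" and h0: "hmap f = \<one>\<^bsub>Hgrp\<^esub>"
      by (auto simp: kernel_def dual_group_def)
    have add: "\<forall>x\<in>ZGamma. \<forall>y\<in>ZGamma. f (\<lambda>v. x v + y v) = f x + f y"
      and frad: "\<forall>r\<in>rad. f r = 0" using fS by (auto simp: Sdual_def)
    have fout: "\<And>x. x \<notin> ZGamma \<Longrightarrow> f x = 0" using fS by (auto simp: Sdual_def)
    define a where "a = (\<lambda>v. f (e v))"
    have repr: "\<And>y. y \<in> ZGamma \<Longrightarrow> f y = (\<Sum>v\<in>Vs. y v * a v)"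
      unfolding a_def by (rule additive_repr[OF add])
    have rz: "\<And>r. r \<in> rad \<Longrightarrow> (\<Sum>v\<in>Vs. r v * a v) = 0"
      using repr frad by (simp add: rad_def)
    have R0: "a (L 1) = - a (L 2) + a (L 3) + a (L 4) - a (L 5) + a (L 6) - a (L 7) + a (L 8) - 2 * a (M 2) + 2 * a (M 3)"
      using rz[OF rv_L1_rad] by (simp add: Vs_explicit rv_L1_def)
    have R1: "a (L 9) = a (L 5) - a (L 6) + a (L 11) - a (M 1) + a (M 2) - a (M 9) + a (M 12)"
      using rz[OF rv_L9_rad] by (simp add: Vs_explicit rv_L9_def)
    have R2: "a (L 10) = a (L 5) - a (L 7) + a (L 11) + a (M 6) - a (M 8) - a (M 9) + a (M 12)"
      using rz[OF rv_L10_rad] by (simp add: Vs_explicit rv_L10_def)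
    have R3: "a (L 12) = a (L 5) - a (L 8) + a (L 11) - a (M 1) + a (M 2) + a (M 6) - a (M 8)"
      using rz[OF rv_L12_rad] by (simp add: Vs_explicit rv_L12_def)
    have R4: "a (M 4) = - a (L 5) + a (L 6) - a (L 7) + a (L 8) + a (M 1) - a (M 2) + a (M 3)"
      using rz[OF rv_M4_rad] by (simp add: Vs_explicit rv_M4_def)
    have R5: "a (M 5) = - a (L 2) + a (L 3) - a (L 5) + a (L 8) - a (M 2) + a (M 3) + a (M 8)"
      using rz[OF rv_M5_rad] by (simp add: Vs_explicit rv_M5_def)
    have R6: "a (M 7) = - a (L 2) + a (L 3) + a (L 6) - a (L 7) - a (M 2) + a (M 3) + a (M 6)"
      using rz[OF rv_M7_rad] by (simp add: Vs_explicit rv_M7_def)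
    have R7: "a (M 10) = - a (L 2) + a (L 4) - a (L 5) + a (L 6) - a (M 2) + a (M 3) + a (M 9)"
      using rz[OF rv_M10_rad] by (simp add: Vs_explicit rv_M10_def)
    have R8: "a (M 11) = - a (L 2) + a (L 4) - a (L 7) + a (L 8) - a (M 2) + a (M 3) + a (M 12)"
      using rz[OF rv_M11_rad] by (simp add: Vs_explicit rv_M11_def)
    obtain k1 where K1: "phiv1 a = 2 * k1" using h0 by (auto simp: hmap_def a_def)
    obtain k2 where K2: "phiv2 a = 2 * k2" using h0 by (auto simp: hmap_def a_def)
    obtain k3 where K3: "phiv3 a = 2 * k3" using h0 by (auto simp: hmap_def a_def)
    obtain k4 where K4: "phiv4 a = 2 * k4" using h0 by (auto simp: hmap_def a_def)
    obtain k5 where K5: "phiv5 a = 16 * k5" using h0 by (auto simp: hmap_def a_def)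
    define x where "x = xvec a k1 k2 k3 k4 k5"
    have lx: "\<forall>v\<in>Vs. lin x v = a v"
      unfolding x_def by (rule kernel_construct[OF R0 R1 R2 R3 R4 R5 R6 R7 R8 K1 K2 K3 K4 K5])
    have "f = (\<lambda>y. if y \<in> ZGamma then form x y else 0)"
    proof
      fix y show "f y = (if y \<in> ZGamma then form x y else 0)"
      proof (cases "y \<in> ZGamma")
        case True
        have "form x y = (\<Sum>v\<in>Vs. y v * a v)"
          unfolding form_lin using lx by (intro sum.cong) auto
        then show ?thesis using True repr by simp
      next
        case False then show ?thesis using fout by simp
      qed
    qed
    then show "f \<in> S_in_dual"
      using xvec_Z unfolding S_in_dual_def x_def by blast
  qed
qed

theorem proposition4p1:
  shows "card Bgens = 15 \<and> freely_generates_S Bgens \<and>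
         dual_group Mod S_in_dual \<cong>
           (integer_mod_group 2 \<times>\<times> integer_mod_group 2 \<times>\<times> integer_mod_group 2 \<times>\<times>
            integer_mod_group 2 \<times>\<times> integer_mod_group 16)"
proof (intro conjI)
  show "card Bgens = 15" by (rule card_Bgens)
  show "freely_generates_S Bgens" by (rule freely)
  show "dual_group Mod S_in_dual \<cong> Hgrp"
    using group_hom.FactGroup_iso[OF group_hom_h hmap_onto] by (simp add: kernel_eq)
qed

end
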